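(* Let $\rho$ be a density operator on $\mathcal H_A\otimes\mathcal H_B$ ($\dim\mathcal H_A=\dim\mathcal H_B=2$) and let $\mu$ be an ansatz. Then $\mathscr M_A'\subseteq\operatorname{box}(\mu)$ if and only if $\mathscr S_A'\subseteq\operatorname{box}(\mu)$.
   Context: $\sigma_0=\mathbb I,\sigma_1,\sigma_2,\sigma_3$ are the identity and Pauli matrices; $\mathbf r\cdot\sigma=\sum_{k=1}^3r_k\sigma_k$. Alice's EPR map is $\rho^{A\to B}(A)=\operatorname{Tr}_A[\rho(A\otimes\mathbb I^B)]$ for Hermitian $A$ on $\mathcal H_A$; $X'$ denotes the image of a set $X$ under this map. $\mathscr M_A=\{M \text{ Hermitian on }\mathcal H_A: O\le M\le\mathbb I^A\}$ and $\mathscr S_A=\{M\in\mathscr M_A:\operatorname{Tr}M=1\}=\{\tfrac12(\mathbb I^A+\mathbf r\cdot\sigma^A):|\mathbf r|\le1\}$. An ansatz is a Borel probability measure $\mu$ on the unit sphere $S^2\subset\mathbb R^3$ with $\int\tfrac12(\mathbb I^B+\mathbf n\cdot\sigma^B)\,d\mu(\mathbf n)=\operatorname{Tr}_A\rho$, and $\operatorname{box}(\mu)=\{\int\beta(\mathbf n)\tfrac12(\mathbb I^B+\mathbf n\cdot\sigma^B)\,d\mu(\mathbf n):\beta:S^2\to[0,1]\text{ Borel}\}$. *)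

theory Defs
  imports "HOL-Probability.Probability"
begin

text \<open>Qubit operators are 2x2 complex matrices indexed by the type 2 (elements 0,1).
  Operators on H_A (x) H_B are matrices indexed by 2 \<times> 2, the first component being A.\<close>

type_synonym qop = "complex ^ 2 ^ 2"
type_synonym qqop = "complex ^ (2 \<times> 2) ^ (2 \<times> 2)"

definition ctrans :: "complex ^ 'n ^ 'n \<Rightarrow> complex ^ 'n ^ 'n" where
  "ctrans M = (\<chi> i j. cnj (M $ j $ i))"

definition hermitian_mat :: "complex ^ 'n ^ 'n \<Rightarrow> bool" where
  "hermitian_mat M \<longleftrightarrow> ctrans M = M"

definition mtrace :: "complex ^ 'n ^ 'n \<Rightarrow> complex" where
  "mtrace M = (\<Sum>i\<in>UNIV. M $ i $ i)"

definition psd :: "complex ^ 'n ^ 'n \<Rightarrow> bool" where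
  "psd M \<longleftrightarrow> hermitian_mat M \<and>
     (\<forall>v :: complex ^ 'n. 0 \<le> Re (\<Sum>i\<in>UNIV. cnj (v $ i) * (M *v v) $ i))"

definition loewner_le :: "complex ^ 'n ^ 'n \<Rightarrow> complex ^ 'n ^ 'n \<Rightarrow> bool" where
  "loewner_le A B \<longleftrightarrow> psd (B - A)"

definition density_op :: "complex ^ 'n ^ 'n \<Rightarrow> bool" where
  "density_op \<rho> \<longleftrightarrow> psd \<rho> \<and> mtrace \<rho> = 1"

definition kron :: "complex ^ 'a ^ 'a \<Rightarrow> complex ^ 'b ^ 'b \<Rightarrow> complex ^ ('a::finite \<times> 'b::finite) ^ ('a \<times> 'b)" where
  "kron A B = (\<chi> p q. A $ fst p $ fst q * B $ snd p $ snd q)"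

definition ptrace_A :: "complex ^ ('a::finite \<times> 'b::finite) ^ ('a \<times> 'b) \<Rightarrow> complex ^ 'b ^ 'b" where
  "ptrace_A M = (\<chi> i j. \<Sum>a\<in>UNIV. M $ (a, i) $ (a, j))"

definition epr_map :: "qqop \<Rightarrow> qop \<Rightarrow> qop" where
  "epr_map \<rho> A = ptrace_A (\<rho> ** kron A (mat 1))"

definition pauli1 :: qop where "pauli1 = (\<chi> i j. if i = j then 0 else 1)"
definition pauli2 :: qop where
  "pauli2 = (\<chi> i j. if i = j then 0 else if i = 0 then - \<i> else \<i>)"
definition pauli3 :: qop where
  "pauli3 = (\<chi> i j. if i = j then (if i = 0 then 1 else -1) else 0)"

text \<open>r \<cdot> \<sigma> for r in R^3 (coordinates r$1, r$2, r$3; note 3 = 0 in the type 3).\<close>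
definition pauli_dot :: "real ^ 3 \<Rightarrow> qop" where
  "pauli_dot r = (r $ 1) *\<^sub>R pauli1 + (r $ 2) *\<^sub>R pauli2 + (r $ 3) *\<^sub>R pauli3"

definition bloch :: "real ^ 3 \<Rightarrow> qop" where
  "bloch r = (1/2) *\<^sub>R (mat 1 + pauli_dot r)"

definition M_A :: "qop set" where
  "M_A = {M. hermitian_mat M \<and> loewner_le 0 M \<and> loewner_le M (mat 1)}"

definition S_A :: "qop set" where
  "S_A = {M \<in> M_A. mtrace M = 1}"

definition mat_integral :: "'x measure \<Rightarrow> ('x \<Rightarrow> complex ^ 'n ^ 'm) \<Rightarrow> complex ^ 'n ^ 'm" where
  "mat_integral \<mu> f = (\<chi> i j. integral\<^sup>L \<mu> (\<lambda>x. f x $ i $ j))"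

definition sphere_prob :: "(real ^ 3) measure \<Rightarrow> bool" where
  "sphere_prob \<mu> \<longleftrightarrow> prob_space \<mu> \<and> sets \<mu> = sets (restrict_space borel (sphere 0 1))
      \<and> space \<mu> = sphere 0 1"

definition ansatz :: "qqop \<Rightarrow> (real ^ 3) measure \<Rightarrow> bool" where
  "ansatz \<rho> \<mu> \<longleftrightarrow> sphere_prob \<mu> \<and> mat_integral \<mu> bloch = ptrace_A \<rho>"

definition ansatz_box :: "(real ^ 3) measure \<Rightarrow> qop set" where
  "ansatz_box \<mu> = {mat_integral \<mu> (\<lambda>n. \<beta> n *\<^sub>R bloch n) | \<beta>.
      \<beta> \<in> borel_measurable \<mu> \<and> (\<forall>n\<in>space \<mu>. 0 \<le> \<beta> n \<and> \<beta> n \<le> 1)}"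

end

theory Submission
  imports Defs
begin


definition qf :: "qop \<Rightarrow> complex^2 \<Rightarrow> real" where
  "qf M v = Re (\<Sum>i\<in>UNIV. cnj (v $ i) * (M *v v) $ i)"

lemma psd_qf: "psd M \<longleftrightarrow> hermitian_mat M \<and> (\<forall>v. 0 \<le> qf M v)"
  by (simp add: psd_def qf_def)

definition Jv :: "complex^2 \<Rightarrow> complex^2" where
  "Jv v = (\<chi> i. if i = 1 then cnj (v $ 2) else - cnj (v $ 1))"

lemma qf_J: "qf (mat (mtrace M) - M) v = qf M (Jv v)"
  unfolding qf_def Jv_def mtrace_def
  by (simp add: sum_2 matrix_vector_mult_def mat_def algebra_simps)

lemma mtrace_2: "mtrace (M::qop) = M$1$1 + M$2$2" by (simp add: mtrace_def sum_2)

lemma herm_diag: "hermitian_mat M \<Longrightarrow> M$i$i = complex_of_real (Re (M$i$i))"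
proof -
  assume "hermitian_mat M"
  then have "cnj (M$i$i) = M$i$i" unfolding hermitian_mat_def ctrans_def
    by (metis vec_lambda_beta)
  then show ?thesis by (metis Reals_cnj_iff complex_is_Real_iff of_real_Re)
qed

lemma herm_trace: "hermitian_mat (M::qop) \<Longrightarrow> mtrace M = complex_of_real (Re (mtrace M))"
  using herm_diag[of M 1] herm_diag[of M 2] unfolding mtrace_2
  by (metis Re_complex_of_real plus_complex.simps(1) of_real_add)

lemma herm_sub: "hermitian_mat M \<Longrightarrow> hermitian_mat N \<Longrightarrow> hermitian_mat (M - N)"
  unfolding hermitian_mat_def ctrans_def by (simp add: vec_eq_iff)

lemma herm_mat_real: "hermitian_mat (mat (complex_of_real r) :: complex^'n^'n)"
  unfolding hermitian_mat_def ctrans_def by (simp add: vec_eq_iff mat_def)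

lemma herm_scale: "hermitian_mat M \<Longrightarrow> hermitian_mat (c *\<^sub>R M)"
  unfolding hermitian_mat_def ctrans_def by (simp add: vec_eq_iff)

lemma psd_trace_sub: "psd (M::qop) \<Longrightarrow> psd (mat (mtrace M) - M)"
  unfolding psd_qf qf_J
  using herm_trace herm_sub herm_mat_real by metis

lemma qf_scale: "qf (c *\<^sub>R M) v = c * qf M v"
  unfolding qf_def by (simp add: sum_2 matrix_vector_mult_def algebra_simps)

lemma psd_scale: "psd (M::qop) \<Longrightarrow> 0 \<le> c \<Longrightarrow> psd (c *\<^sub>R M)"
  unfolding psd_qf qf_scale by (simp add: herm_scale)

lemma qf_e1: "qf M (\<chi> i. if i = 1 then 1 else 0) = Re (M$1$1)"
  unfolding qf_def by (simp add: sum_2 matrix_vector_mult_def)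
lemma qf_e2: "qf M (\<chi> i. if i = 2 then 1 else 0) = Re (M$2$2)"
  unfolding qf_def by (simp add: sum_2 matrix_vector_mult_def)
lemma qf_v: "qf M (\<chi> i. if i = 1 then 1 else x) = Re (M$1$1 + M$1$2 * x + cnj x * M$2$1 + cnj x * M$2$2 * x)"
  unfolding qf_def by (simp add: sum_2 matrix_vector_mult_def algebra_simps)

lemma psd_trace_ge0: "psd (M::qop) \<Longrightarrow> 0 \<le> Re (mtrace M)"
  using qf_e1[of M] qf_e2[of M] unfolding psd_qf mtrace_2 by (metis add_nonneg_nonneg plus_complex.simps(1))



lemma psd_trace0: "psd (M::qop) \<Longrightarrow> mtrace M = 0 \<Longrightarrow> M = 0"
proof -
  assume p: "psd M" and t: "mtrace M = 0"
  have h: "hermitian_mat M" and q: "\<And>v. 0 \<le> qf M v" using p by (auto simp: psd_qf)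
  have "psd (mat (mtrace M) - M)" using psd_trace_sub[OF p] .
  then have q2: "\<And>v. 0 \<le> qf (-M) v" using t by (simp add: psd_qf)
  have neg: "qf (-M) v = - qf M v" for v using qf_scale[of "-1" M v] by simp
  have z: "qf M v = 0" for v using q[of v] q2[of v] neg[of v] by linarith
  have c21: "M$2$1 = cnj (M$1$2)"
  proof -
    have "ctrans M $ 2 $ 1 = M $ 2 $ 1" using h unfolding hermitian_mat_def by simp
    then show ?thesis by (simp add: ctrans_def)
  qed
  have d1: "M$1$1 = 0" using z[of "\<chi> i. if i = 1 then 1 else 0"] herm_diag[OF h, of 1] qf_e1[of M] by simp
  have d2: "M$2$2 = 0" using z[of "\<chi> i. if i = 2 then 1 else 0"] herm_diag[OF h, of 2] qf_e2[of M] by simp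
  have "qf M (\<chi> i. if i = 1 then 1 else 1) = 2 * Re (M$1$2)" unfolding qf_v d1 d2 c21 by simp
  then have r: "Re (M$1$2) = 0" using z by simp
  have "qf M (\<chi> i. if i = 1 then 1 else \<i>) = - 2 * Im (M$1$2)" unfolding qf_v d1 d2 c21 by simp
  then have i: "Im (M$1$2) = 0" using z by simp
  have o: "M$1$2 = 0" using r i complex_eqI by auto
  have "M$i$j = 0" for i j using exhaust_2[of i] exhaust_2[of j] d1 d2 o c21 by auto
  then show "M = 0" by (simp add: vec_eq_iff)
qed



lemma kron_diff: "kron (A - B) C = kron A C - kron B C"
  by (simp add: kron_def vec_eq_iff algebra_simps)
lemma kron_scale: "kron (c *\<^sub>R A) C = c *\<^sub>R kron A C"
  by (simp add: kron_def vec_eq_iff)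
lemma kron_one: "kron (mat 1 :: complex^'a^'a) (mat 1 :: complex^'b^'b) = (mat 1 :: complex^('a::finite\<times>'b::finite)^('a\<times>'b))"
  by (auto simp add: kron_def vec_eq_iff mat_def prod_eq_iff)
lemma ptrace_diff: "ptrace_A (A - B) = ptrace_A A - ptrace_A B"
  by (simp add: ptrace_A_def vec_eq_iff sum_subtractf)
lemma ptrace_scale: "ptrace_A (c *\<^sub>R A) = c *\<^sub>R ptrace_A A"
  by (simp add: ptrace_A_def vec_eq_iff scaleR_sum_right)
lemma mm_diff: "(A::complex^'n^'m) ** (B - C) = A ** B - A ** C"
  by (simp add: matrix_matrix_mult_def vec_eq_iff algebra_simps sum_subtractf)
lemma mm_scale: "(A::complex^'n^'m) ** (c *\<^sub>R B) = c *\<^sub>R (A ** B)"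
  by (simp add: matrix_matrix_mult_def vec_eq_iff scaleR_sum_right)

lemma epr_diff: "epr_map \<rho> (X - Y) = epr_map \<rho> X - epr_map \<rho> Y"
  by (simp add: epr_map_def kron_diff mm_diff ptrace_diff)
lemma epr_scale: "epr_map \<rho> (c *\<^sub>R X) = c *\<^sub>R epr_map \<rho> X"
  by (simp add: epr_map_def kron_scale mm_scale ptrace_scale)
lemma epr_one: "epr_map \<rho> (mat 1) = ptrace_A \<rho>"
  by (simp add: epr_map_def kron_one)
lemma epr_zero: "epr_map \<rho> 0 = 0"
  using epr_scale[of \<rho> 0 0] by simp

lemma cont_comp: "continuous_on UNIV (\<lambda>n::real^3. n $ k)"
  using continuous_on_component[OF continuous_on_id, of UNIV k] by simp

lemma cont_bloch0: "continuous_on UNIV bloch"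
  unfolding bloch_def pauli_dot_def
  by (intro continuous_on_scaleR continuous_on_add continuous_on_const cont_comp)

lemma cont_bloch: "continuous_on UNIV (\<lambda>n. bloch n $ i $ j)"
  by (intro continuous_on_component cont_bloch0)

lemma meas_bloch: "sphere_prob \<mu> \<Longrightarrow> (\<lambda>n. bloch n $ i $ j) \<in> borel_measurable \<mu>"
proof -
  assume sp: "sphere_prob \<mu>"
  have "(\<lambda>n. bloch n $ i $ j) \<in> borel_measurable borel" by (rule borel_measurable_continuous_onI[OF cont_bloch])
  then have "(\<lambda>n. bloch n $ i $ j) \<in> borel_measurable (restrict_space borel (sphere 0 1))" by (rule measurable_restrict_space1)
  moreover have "sets \<mu> = sets (restrict_space borel (sphere 0 1))" using sp by (simp add: sphere_prob_def)
  ultimately show ?thesis using measurable_cong_sets[of \<mu> "restrict_space borel (sphere 0 1)" "borel::complex measure" borel] by simp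
qed

lemma bound_bloch: "\<exists>B. \<forall>n\<in>sphere 0 1. norm (bloch n $ i $ j) \<le> B"
proof -
  have "compact ((\<lambda>n. bloch n $ i $ j) ` sphere (0::real^3) 1)"
    by (intro compact_continuous_image continuous_on_subset[OF cont_bloch]) auto
  then have "bounded ((\<lambda>n. bloch n $ i $ j) ` sphere (0::real^3) 1)" by (rule compact_imp_bounded)
  then obtain a where "\<forall>x\<in>(\<lambda>n. bloch n $ i $ j) ` sphere (0::real^3) 1. norm x \<le> a"
    unfolding bounded_iff by blast
  then show ?thesis by auto
qed

lemma int_bloch:
  assumes sp: "sphere_prob \<mu>" and bm: "\<beta> \<in> borel_measurable \<mu>" and b: "\<forall>n\<in>space \<mu>. \<bar>\<beta> n\<bar> \<le> 1"
  shows "integrable \<mu> (\<lambda>n. (\<beta> n *\<^sub>R bloch n) $ i $ j)"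
proof -
  interpret prob_space \<mu> using sp by (simp add: sphere_prob_def)
  obtain B where B: "\<forall>n\<in>sphere 0 1. norm (bloch n $ i $ j) \<le> B" using bound_bloch by blast
  have "\<forall>n\<in>space \<mu>. norm ((\<beta> n *\<^sub>R bloch n) $ i $ j) \<le> 1 * B"
  proof
    fix n assume n: "n \<in> space \<mu>"
    then have "n \<in> sphere 0 1" using sp by (simp add: sphere_prob_def)
    then have "norm (bloch n $ i $ j) \<le> B" using B by blast
    moreover have "\<bar>\<beta> n\<bar> \<le> 1" using b n by blast
    ultimately show "norm ((\<beta> n *\<^sub>R bloch n) $ i $ j) \<le> 1 * B"
      using mult_left_le_one_le[of "norm (bloch n $ i $ j)" "\<bar>\<beta> n\<bar>"] by simp
  qed
  then have "AE n in \<mu>. norm ((\<beta> n *\<^sub>R bloch n) $ i $ j) \<le> 1 * B" by (simp add: AE_I2)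
  moreover have "(\<lambda>n. (\<beta> n *\<^sub>R bloch n) $ i $ j) \<in> borel_measurable \<mu>"
    using meas_bloch[OF sp, of i j] bm by simp
  ultimately show ?thesis by (rule integrable_const_bound)
qed

lemma box_zero: "0 \<in> ansatz_box \<mu>"
  unfolding ansatz_box_def
  by (rule CollectI, rule exI[of _ "\<lambda>_. 0"]) (simp add: mat_integral_def vec_eq_iff)

lemma box_scale:
  assumes X: "X \<in> ansatz_box \<mu>" and c: "0 \<le> c" "c \<le> 1"
  shows "c *\<^sub>R X \<in> ansatz_box \<mu>"
proof -
  obtain \<beta> where X: "X = mat_integral \<mu> (\<lambda>n. \<beta> n *\<^sub>R bloch n)" and bm: "\<beta> \<in> borel_measurable \<mu>"
    and b: "\<forall>n\<in>space \<mu>. 0 \<le> \<beta> n \<and> \<beta> n \<le> 1" using X unfolding ansatz_box_def by blast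
  have "c *\<^sub>R X = mat_integral \<mu> (\<lambda>n. (c * \<beta> n) *\<^sub>R bloch n)"
    unfolding X mat_integral_def by (simp add: vec_eq_iff scaleR_conv_of_real mult.assoc)
  moreover have "(\<lambda>n. c * \<beta> n) \<in> borel_measurable \<mu>" using bm by simp
  moreover have "\<forall>n\<in>space \<mu>. 0 \<le> c * \<beta> n \<and> c * \<beta> n \<le> 1"
    using b c by (simp add: mult_le_one)
  ultimately show ?thesis unfolding ansatz_box_def
    by (intro CollectI exI[of _ "\<lambda>n. c * \<beta> n"]) simp
qed

lemma box_compl:
  assumes a: "ansatz \<rho> \<mu>" and X: "X \<in> ansatz_box \<mu>"
  shows "ptrace_A \<rho> - X \<in> ansatz_box \<mu>"
proof -
  have sp: "sphere_prob \<mu>" using a by (simp add: ansatz_def)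
  obtain \<beta> where X: "X = mat_integral \<mu> (\<lambda>n. \<beta> n *\<^sub>R bloch n)" and bm: "\<beta> \<in> borel_measurable \<mu>"
    and b: "\<forall>n\<in>space \<mu>. 0 \<le> \<beta> n \<and> \<beta> n \<le> 1" using X unfolding ansatz_box_def by blast
  have i1: "integrable \<mu> (\<lambda>n. bloch n $ i $ j)" for i j
    using int_bloch[OF sp, of "\<lambda>_. 1" i j] by simp
  have i2: "integrable \<mu> (\<lambda>n. (\<beta> n *\<^sub>R bloch n) $ i $ j)" for i j
    by (rule int_bloch[OF sp bm]) (use b in auto)
  have e: "integral\<^sup>L \<mu> (\<lambda>n. ((1 - \<beta> n) *\<^sub>R bloch n) $ i $ j)
      = integral\<^sup>L \<mu> (\<lambda>n. bloch n $ i $ j) - integral\<^sup>L \<mu> (\<lambda>n. (\<beta> n *\<^sub>R bloch n) $ i $ j)" for i j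
  proof -
    have "integral\<^sup>L \<mu> (\<lambda>n. ((1 - \<beta> n) *\<^sub>R bloch n) $ i $ j)
        = integral\<^sup>L \<mu> (\<lambda>n. bloch n $ i $ j - (\<beta> n *\<^sub>R bloch n) $ i $ j)"
      by (simp add: algebra_simps)
    also have "\<dots> = integral\<^sup>L \<mu> (\<lambda>n. bloch n $ i $ j) - integral\<^sup>L \<mu> (\<lambda>n. (\<beta> n *\<^sub>R bloch n) $ i $ j)"
      using i1[of i j] i2[of i j] by simp
    finally show ?thesis .
  qed
  have pt: "ptrace_A \<rho> = mat_integral \<mu> bloch" using a by (simp add: ansatz_def)
  have "ptrace_A \<rho> - X = mat_integral \<mu> (\<lambda>n. (1 - \<beta> n) *\<^sub>R bloch n)"
    unfolding pt X mat_integral_def vec_eq_iff using e by simp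
  moreover have "(\<lambda>n. 1 - \<beta> n) \<in> borel_measurable \<mu>" using bm by simp
  moreover have "\<forall>n\<in>space \<mu>. 0 \<le> 1 - \<beta> n \<and> 1 - \<beta> n \<le> 1" using b by simp
  ultimately show ?thesis unfolding ansatz_box_def
    by (intro CollectI exI[of _ "\<lambda>n. 1 - \<beta> n"]) simp
qed



lemma MA_D: "M \<in> M_A \<Longrightarrow> hermitian_mat M \<and> psd M \<and> psd (mat 1 - M)"
  by (simp add: M_A_def loewner_le_def)

lemma MA_I: "hermitian_mat M \<Longrightarrow> psd M \<Longrightarrow> psd (mat 1 - M) \<Longrightarrow> M \<in> M_A"
  by (simp add: M_A_def loewner_le_def)

lemma mtrace_scale: "mtrace (c *\<^sub>R (M::qop)) = c *\<^sub>R mtrace M"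
  by (simp add: mtrace_2 scaleR_add_right)

lemma key_small:
  assumes M: "M \<in> M_A" and t1: "Re (mtrace M) \<le> 1" and S: "epr_map \<rho> ` S_A \<subseteq> ansatz_box \<mu>"
  shows "epr_map \<rho> M \<in> ansatz_box \<mu>"
proof -
  define t where "t = Re (mtrace M)"
  have h: "hermitian_mat M" and p: "psd M" and p1: "psd (mat 1 - M)" using MA_D[OF M] by auto
  have tr: "mtrace M = complex_of_real t" unfolding t_def using herm_trace[OF h] .
  have t0: "0 \<le> t" unfolding t_def using psd_trace_ge0[OF p] .
  show ?thesis
  proof (cases "t = 0")
    case True
    then have "M = 0" using psd_trace0[OF p] tr by simp
    then show ?thesis using box_zero epr_zero by simp
  next
    case False
    then have tp: "0 < t" using t0 by simp
    define S' where "S' = (1/t) *\<^sub>R M"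
    have eq: "mat 1 - S' = (1/t) *\<^sub>R (mat (mtrace M) - M)"
    proof -
      have "(mat 1 - S') $ i $ j = ((1/t) *\<^sub>R (mat (mtrace M) - M)) $ i $ j" for i j
        using tp unfolding S'_def tr by (cases "i = j") (simp_all add: mat_def scaleR_diff_right scaleR_conv_of_real[where ?'a=complex])
      then show ?thesis by (simp add: vec_eq_iff)
    qed
    have "psd (mat 1 - S')" unfolding eq using psd_scale[OF psd_trace_sub[OF p], of "1/t"] tp by simp
    then have "S' \<in> M_A" using h p tp unfolding S'_def by (intro MA_I) (simp_all add: herm_scale psd_scale)
    moreover have "mtrace S' = 1" unfolding S'_def mtrace_scale tr using tp
      by (simp add: scaleR_conv_of_real)
    ultimately have "S' \<in> S_A" by (simp add: S_A_def)
    then have "epr_map \<rho> S' \<in> ansatz_box \<mu>" using S by blast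
    then have "t *\<^sub>R epr_map \<rho> S' \<in> ansatz_box \<mu>" using t0 t1 by (intro box_scale) (auto simp: t_def)
    moreover have "t *\<^sub>R S' = M" unfolding S'_def using tp by simp
    ultimately show ?thesis by (metis epr_scale)
  qed
qed

lemma key:
  assumes a: "ansatz \<rho> \<mu>" and M: "M \<in> M_A" and S: "epr_map \<rho> ` S_A \<subseteq> ansatz_box \<mu>"
  shows "epr_map \<rho> M \<in> ansatz_box \<mu>"
proof (cases "Re (mtrace M) \<le> 1")
  case True
  then show ?thesis using key_small[OF M _ S] by simp
next
  case False
  have h: "hermitian_mat M" and p: "psd M" and p1: "psd (mat 1 - M)" using MA_D[OF M] by auto
  define N where "N = mat 1 - M"
  have hI: "hermitian_mat (mat 1 :: qop)" using herm_mat_real[of 1] by simp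
  have "N \<in> M_A" unfolding N_def by (rule MA_I) (use h p p1 hI herm_sub in auto)
  moreover have "Re (mtrace N) \<le> 1" using False unfolding N_def mtrace_2 by (simp add: mat_def)
  ultimately have "epr_map \<rho> N \<in> ansatz_box \<mu>" using key_small S by blast
  then have "ptrace_A \<rho> - epr_map \<rho> N \<in> ansatz_box \<mu>" by (rule box_compl[OF a])
  moreover have "ptrace_A \<rho> - epr_map \<rho> N = epr_map \<rho> M"
    unfolding N_def epr_diff epr_one by simp
  ultimately show ?thesis by simp
qed

theorem lemma1:
  fixes \<rho> :: qqop and \<mu> :: "(real ^ 3) measure"
  assumes "density_op \<rho>" and "ansatz \<rho> \<mu>"
  shows "epr_map \<rho> ` M_A \<subseteq> ansatz_box \<mu> \<longleftrightarrow> epr_map \<rho> ` S_A \<subseteq> ansatz_box \<mu>"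
proof
  assume "epr_map \<rho> ` M_A \<subseteq> ansatz_box \<mu>"
  moreover have "S_A \<subseteq> M_A" by (auto simp: S_A_def)
  ultimately show "epr_map \<rho> ` S_A \<subseteq> ansatz_box \<mu>" by blast
next
  assume "epr_map \<rho> ` S_A \<subseteq> ansatz_box \<mu>"
  then show "epr_map \<rho> ` M_A \<subseteq> ansatz_box \<mu>" using key[OF assms(2)] by blast
qed

end
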